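(* Let $H$ be a $d\times d$ Hermitian matrix and $1/d<t<1$. Then there exists a density operator $\rho^*$ with $\mathrm{Tr}((\rho^* )^2)=t$ that maximizes $\mathrm{Tr}(\rho H)$ over $S^t$, and any such $\rho^*$ is an optimizer of the (non-convex) problem $$\min\{\|\rho-H\|_2:\ \rho\succeq0,\ \mathrm{Tr}\rho=1,\ \mathrm{Tr}(\rho^2)=t\}.$$
   Context: $S^t=\{\rho\in\mathcal{L}(\mathbb{C}^d):\rho\succeq 0,\ \mathrm{Tr}\rho=1,\ \mathrm{Tr}(\rho^2)\le t\}$; $\|\cdot\|_2$ is the Frobenius norm. *)

theory Defs
  imports "HOL-Analysis.Analysis"
begin

text \<open>Complex d x d matrices are modelled as complex^'n^'n with d = CARD('n).\<close>

definition conj_transpose :: "complex^'n^'n \<Rightarrow> complex^'n^'n" where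
  "conj_transpose A = (\<chi> i j. cnj (A $ j $ i))"

definition hermitian :: "complex^'n^'n \<Rightarrow> bool" where
  "hermitian A \<longleftrightarrow> conj_transpose A = A"

definition qform :: "complex^'n^'n \<Rightarrow> complex^'n \<Rightarrow> complex" where
  "qform A x = (\<Sum>i\<in>UNIV. \<Sum>j\<in>UNIV. cnj (x $ i) * A $ i $ j * x $ j)"

definition psd :: "complex^'n^'n \<Rightarrow> bool" where
  "psd A \<longleftrightarrow> (\<forall>x. Im (qform A x) = 0 \<and> 0 \<le> Re (qform A x))"

definition frob_norm :: "complex^'n^'n \<Rightarrow> real" where
  "frob_norm A = sqrt (\<Sum>i\<in>UNIV. \<Sum>j\<in>UNIV. (cmod (A $ i $ j))\<^sup>2)"

text \<open>S^t = {rho psd, Tr rho = 1, Tr(rho^2) <= t}.  Tr(rho^2) is real for psd rho.\<close>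
definition St :: "real \<Rightarrow> (complex^'n^'n) set" where
  "St t = {\<rho>. psd \<rho> \<and> trace \<rho> = 1 \<and> Re (trace (\<rho> ** \<rho>)) \<le> t}"

end

theory Submission
  imports Defs
begin

definition bil :: "complex^'n^'n \<Rightarrow> complex^'n \<Rightarrow> complex^'n \<Rightarrow> complex" where
  "bil A x y = (\<Sum>i\<in>UNIV. \<Sum>j\<in>UNIV. cnj (x $ i) * A $ i $ j * y $ j)"

lemma qform_bil: "qform A x = bil A x x"
  by (simp add: qform_def bil_def)

lemma bil_add_left: "bil A (x + y) z = bil A x z + bil A y z"
  by (simp add: bil_def algebra_simps sum.distrib)
lemma bil_add_right: "bil A x (y + z) = bil A x y + bil A x z"
  by (simp add: bil_def algebra_simps sum.distrib)

lemma qform_add: "qform A (x + y) = qform A x + qform A y + bil A x y + bil A y x"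
  by (simp add: qform_bil bil_add_left bil_add_right)

lemma if0_simps: "(if P then (a::complex) else 0) * x = (if P then a * x else 0)"
  "x * (if P then (a::complex) else 0) = (if P then x * a else 0)"
  "cnj (if P then (a::complex) else 0) = (if P then cnj a else 0)"
  "(\<Sum>j\<in>S. if P then f j else (0::complex)) = (if P then (\<Sum>j\<in>S. f j) else 0)"
  by auto

lemma bil_axis: "bil A (axis i a) (axis j b) = cnj a * A $ i $ j * b"
  by (simp add: bil_def axis_def if0_simps)

lemma psd_diag: assumes "psd A" shows "Im (A$i$i) = 0" "0 \<le> Re (A$i$i)"
  using assms[unfolded psd_def, rule_format, of "axis i 1"]
  by (auto simp: qform_bil bil_axis)

lemma psd_herm: assumes "psd A" shows "A$j$i = cnj (A$i$j)"
proof -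
  have q: "qform A (axis i 1 + axis j c) = A$i$i + cnj c * c * A$j$j + c * A$i$j + cnj c * A$j$i" for c
    unfolding qform_add by (simp add: qform_bil bil_axis)
  have "Im (qform A (axis i 1 + axis j 1)) = 0" "Im (qform A (axis i 1 + axis j \<i>)) = 0"
    using assms by (auto simp: psd_def)
  then have "Im (A$i$j + A$j$i) = 0" "Re (A$i$j - A$j$i) = 0"
    using psd_diag[OF assms, of i] psd_diag[OF assms, of j]
    by (auto simp: q)
  then show ?thesis by (simp add: complex_eq_iff)
qed

lemma qform_two: "qform A (axis i a + axis j c) = cnj a * A$i$i * a + cnj c * A$j$j * c + cnj a * A$i$j * c + cnj c * A$j$i * a"
  unfolding qform_add by (simp add: qform_bil bil_axis)

lemma psd_zero_row: assumes "psd A" "A$i$i = 0" shows "A$i$j = 0"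
proof (rule ccontr)
  assume nz: "A$i$j \<noteq> 0"
  define m where "m = (cmod (A$i$j))^2"
  have m: "m > 0" using nz by (simp add: m_def)
  define s where "s = (Re (A$j$j) + 1) / m"
  define c where "c = - complex_of_real s * A$i$j"
  have "0 \<le> Re (qform A (axis j 1 + axis i c))" using assms(1) by (simp add: psd_def)
  also have "qform A (axis j 1 + axis i c) = A$j$j + c * A$j$i + cnj c * A$i$j"
    using assms(2) by (simp add: qform_two)
  also have "A$j$i = cnj (A$i$j)" using psd_herm[OF assms(1)] .
  also have "Re (A$j$j + c * cnj (A$i$j) + cnj c * A$i$j) = Re (A$j$j) - 2 * s * m"
  proof -
    have "A$i$j * cnj (A$i$j) = complex_of_real m" by (simp only: m_def complex_norm_square)
    moreover have "c * cnj (A$i$j) + cnj c * A$i$j = - 2 * complex_of_real s * (A$i$j * cnj (A$i$j))"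
      by (simp add: c_def algebra_simps)
    ultimately have "c * cnj (A$i$j) + cnj c * A$i$j = - 2 * complex_of_real (s * m)" by simp
    then have "Re (c * cnj (A$i$j) + cnj c * A$i$j) = - 2 * s * m" by simp
    then show ?thesis by simp
  qed
  also have "\<dots> = - Re (A$j$j) - 2" unfolding s_def using m by (simp add: field_simps)
  finally show False using psd_diag(2)[OF assms(1), of j] by simp
qed

lemma qform_axis: "qform A (axis i c) = cnj c * A$i$i * c"
  by (simp add: qform_bil bil_axis)

lemma bil_axis_right: "bil A x (axis i c) = (\<Sum>k\<in>UNIV. cnj (x$k) * A$k$i) * c"
  by (simp add: bil_def axis_def if0_simps sum_distrib_right)

lemma bil_axis_left: "bil A (axis i c) x = cnj c * (\<Sum>l\<in>UNIV. A$i$l * x$l)"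
  by (simp add: bil_def axis_def if0_simps sum_distrib_left mult.assoc)

lemma psd_CS:
  assumes "psd A" "Re (A$i$i) > 0"
  shows "(cmod (\<Sum>k\<in>UNIV. cnj (x$k) * A$k$i))^2 \<le> Re (A$i$i) * Re (qform A x)"
proof -
  define b where "b = (\<Sum>k\<in>UNIV. cnj (x$k) * A$k$i)"
  define r where "r = Re (A$i$i)"
  have r: "r > 0" using assms by (simp add: r_def)
  have Aii: "A$i$i = complex_of_real r" using psd_diag(1)[OF assms(1), of i] by (simp add: r_def complex_eq_iff)
  have bl: "(\<Sum>l\<in>UNIV. A$i$l * x$l) = cnj b"
    unfolding b_def by (simp add: psd_herm[OF assms(1), of _ i] mult.commute)
  define c where "c = - complex_of_real (1/r) * cnj b"
  have "0 \<le> Re (qform A (x + axis i c))" using assms(1) by (simp add: psd_def)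
  also have "qform A (x + axis i c) = qform A x + cnj c * A$i$i * c + b * c + cnj c * cnj b"
    unfolding qform_add by (simp add: qform_axis bil_axis_right bil_axis_left bl b_def[symmetric])
  also have "Re \<dots> = Re (qform A x) - (cmod b)^2 / r"
  proof -
    have "b * cnj b = complex_of_real ((cmod b)^2)" by (simp only: complex_norm_square)
    then show ?thesis unfolding c_def Aii using r
      by (simp add: algebra_simps)
  qed
  finally show ?thesis using r unfolding b_def[symmetric] r_def[symmetric] by (simp add: field_simps)
qed


lemma trace_psd_step:
  fixes \<rho> A :: "complex^'n^'n"
  assumes "\<forall>x. 0 \<le> Re (qform A x)"
  shows "psd \<rho> \<Longrightarrow> card {i. \<rho>$i$i \<noteq> 0} = n \<Longrightarrow> 0 \<le> Re (\<Sum>i\<in>UNIV. \<Sum>j\<in>UNIV. \<rho>$i$j * A$j$i)"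
proof (induction n arbitrary: \<rho> rule: less_induct)
  case (less n \<rho>)
  show ?case
  proof (cases "\<forall>i. \<rho>$i$i = 0")
    case True
    then have "\<rho>$i$j = 0" for i j using psd_zero_row[OF less.prems(1)] by blast
    then show ?thesis by simp
  next
    case False
    then obtain i where i: "\<rho>$i$i \<noteq> 0" by blast
    define r where "r = Re (\<rho>$i$i)"
    have rii: "\<rho>$i$i = complex_of_real r" using psd_diag(1)[OF less.prems(1), of i] by (simp add: r_def complex_eq_iff)
    have r0: "r \<noteq> 0" using i rii by auto
    have r: "r > 0" using psd_diag(2)[OF less.prems(1), of i] r0 unfolding r_def by linarith
    define w :: "complex^'n" where "w = (\<chi> k. \<rho>$k$i / complex_of_real (sqrt r))"
    define \<rho>' :: "complex^'n^'n" where "\<rho>' = (\<chi> k l. \<rho>$k$l - w$k * cnj (w$l))"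
    have herm: "\<rho>$k$l = cnj (\<rho>$l$k)" for k l by (rule psd_herm[OF less.prems(1)])
    have ww: "w$k * cnj (w$l) = \<rho>$k$i * \<rho>$i$l / complex_of_real r" for k l
    proof -
      have "complex_of_real (sqrt r) * complex_of_real (sqrt r) = complex_of_real r"
        using r by (simp flip: of_real_mult)
      then show ?thesis unfolding w_def using herm[of i l] r by (simp add: field_simps)
    qed
    have qf: "qform \<rho>' x = qform \<rho> x - (\<Sum>k\<in>UNIV. cnj (x$k) * w$k) * cnj (\<Sum>k\<in>UNIV. cnj (x$k) * w$k)" for x
    proof -
      have "(\<Sum>k\<in>UNIV. cnj (x$k) * w$k) * cnj (\<Sum>k\<in>UNIV. cnj (x$k) * w$k)
          = (\<Sum>k\<in>UNIV. cnj (x$k) * w$k) * (\<Sum>l\<in>UNIV. cnj (w$l) * x$l)"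
        by (simp add: mult.commute)
      also have "\<dots> = (\<Sum>k\<in>UNIV. \<Sum>l\<in>UNIV. cnj (x$k) * (w$k * cnj (w$l)) * x$l)"
        by (simp add: sum_product mult.assoc)
      finally show ?thesis
        by (simp add: qform_def \<rho>'_def algebra_simps sum_subtractf)
    qed
    have psd': "psd \<rho>'"
      unfolding psd_def
    proof
      fix x
      define \<beta> where "\<beta> = (\<Sum>k\<in>UNIV. cnj (x$k) * w$k)"
      define b where "b = (\<Sum>k\<in>UNIV. cnj (x$k) * \<rho>$k$i)"
      have "\<beta> = b / complex_of_real (sqrt r)"
        unfolding \<beta>_def b_def w_def by (simp add: sum_divide_distrib)
      then have "cmod \<beta> ^ 2 = (cmod b)^2 / r" using r by (simp add: norm_divide power_divide)
      moreover have "(cmod b)^2 \<le> r * Re (qform \<rho> x)"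
        using psd_CS[OF less.prems(1), of i x] r unfolding r_def b_def by simp
      ultimately have "r * cmod \<beta> ^ 2 \<le> r * Re (qform \<rho> x)" using r by (simp add: field_simps)
      then have le: "cmod \<beta> ^ 2 \<le> Re (qform \<rho> x)" using r by (simp add: mult_le_cancel_left_pos)
      have bb: "\<beta> * cnj \<beta> = complex_of_real (cmod \<beta> ^ 2)" by (simp only: complex_norm_square)
      have "qform \<rho>' x = qform \<rho> x - complex_of_real (cmod \<beta> ^ 2)"
        unfolding qf \<beta>_def[symmetric] bb ..
      then show "Im (qform \<rho>' x) = 0 \<and> 0 \<le> Re (qform \<rho>' x)"
        using less.prems(1) le unfolding psd_def by simp
    qed
    have sub: "{k. \<rho>'$k$k \<noteq> 0} \<subseteq> {k. \<rho>$k$k \<noteq> 0} - {i}"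
    proof
      fix k assume k: "k \<in> {k. \<rho>'$k$k \<noteq> 0}"
      have "k \<noteq> i"
      proof
        assume "k = i"
        then have "\<rho>'$k$k = \<rho>$i$i - \<rho>$i$i * \<rho>$i$i / complex_of_real r"
          unfolding \<rho>'_def using ww by simp
        also have "\<dots> = 0" using rii r by simp
        finally show False using k by simp
      qed
      moreover have "\<rho>$k$k \<noteq> 0"
      proof
        assume kk: "\<rho>$k$k = 0"
        then have "\<rho>$k$i = 0" using psd_zero_row[OF less.prems(1)] by blast
        then have "\<rho>'$k$k = 0" unfolding \<rho>'_def using ww kk by simp
        then show False using k by simp
      qed
      ultimately show "k \<in> {k. \<rho>$k$k \<noteq> 0} - {i}" by simp
    qed
    have "card {k. \<rho>'$k$k \<noteq> 0} < n"
    proof -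
      have "{k. \<rho>'$k$k \<noteq> 0} \<subset> {k. \<rho>$k$k \<noteq> 0}" using sub i by blast
      then have "card {k. \<rho>'$k$k \<noteq> 0} < card {k. \<rho>$k$k \<noteq> 0}"
        by (rule psubset_card_mono[rotated]) simp
      then show ?thesis using less.prems(2) by simp
    qed
    then have IH: "0 \<le> Re (\<Sum>i\<in>UNIV. \<Sum>j\<in>UNIV. \<rho>'$i$j * A$j$i)"
      using less.IH psd' by blast
    have split: "(\<Sum>i\<in>UNIV. \<Sum>j\<in>UNIV. \<rho>$i$j * A$j$i)
        = (\<Sum>i\<in>UNIV. \<Sum>j\<in>UNIV. \<rho>'$i$j * A$j$i) + qform A w"
    proof -
      have "qform A w = (\<Sum>j\<in>UNIV. \<Sum>i\<in>UNIV. cnj (w$j) * A$j$i * w$i)"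
        by (simp add: qform_def)
      also have "\<dots> = (\<Sum>i\<in>UNIV. \<Sum>j\<in>UNIV. (w$i * cnj (w$j)) * A$j$i)"
        by (subst sum.swap) (simp add: mult_ac)
      finally show ?thesis
        by (simp add: \<rho>'_def algebra_simps sum.distrib[symmetric])
    qed
    show ?thesis unfolding split using IH assms by simp
  qed
qed

lemma trace_psd_nonneg:
  fixes \<rho> A :: "complex^'n^'n"
  assumes "psd \<rho>" "\<forall>x. 0 \<le> Re (qform A x)"
  shows "0 \<le> Re (\<Sum>i\<in>UNIV. \<Sum>j\<in>UNIV. \<rho>$i$j * A$j$i)"
  using trace_psd_step[OF assms(2) assms(1)] by blast


lemma norm_sq_mat: "(norm (A::complex^'n^'n))^2 = (\<Sum>i\<in>UNIV. \<Sum>j\<in>UNIV. (cmod (A$i$j))^2)"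
proof -
  have "(norm (A$i))^2 = (\<Sum>j\<in>UNIV. (cmod (A$i$j))^2)" for i
    unfolding norm_vec_def L2_set_def by (simp add: sum_nonneg)
  then show ?thesis unfolding norm_vec_def[of A] L2_set_def by (simp add: sum_nonneg)
qed

lemma frob_norm_eq: "frob_norm A = norm A"
  unfolding frob_norm_def norm_sq_mat[symmetric] by simp

lemma trace_mult: "trace (X ** Y) = (\<Sum>i\<in>UNIV. \<Sum>k\<in>UNIV. X$i$k * Y$k$i)"
  by (simp add: trace_def matrix_matrix_mult_def)

lemma herm_entry: "hermitian H \<Longrightarrow> H$j$i = cnj (H$i$j)"
  unfolding hermitian_def conj_transpose_def
  by (metis (no_types, lifting) complex_cnj_cnj vec_lambda_beta)

lemma psd_purity: assumes "psd \<rho>" shows "trace (\<rho> ** \<rho>) = complex_of_real ((norm \<rho>)^2)"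
proof -
  have e: "\<rho>$i$k * \<rho>$k$i = complex_of_real ((cmod (\<rho>$i$k))^2)" for i k
    by (subst psd_herm[OF assms, of k i]) (simp only: complex_norm_square)
  have "trace (\<rho> ** \<rho>) = (\<Sum>i\<in>UNIV. \<Sum>k\<in>UNIV. complex_of_real ((cmod (\<rho>$i$k))^2))"
    unfolding trace_mult e ..
  then show ?thesis by (simp add: norm_sq_mat)
qed

lemma inner_mat: assumes "hermitian H"
  shows "inner X H = Re (trace (X ** H))"
proof -
  have e: "inner (X$i$j) (H$i$j) = Re (X$i$j * H$j$i)" for i j
    by (subst herm_entry[OF assms, of i j]) (simp add: inner_complex_def)
  have "inner X H = (\<Sum>i\<in>UNIV. \<Sum>j\<in>UNIV. Re (X$i$j * H$j$i))"
    by (simp add: inner_vec_def e)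
  then show ?thesis by (simp add: trace_mult)
qed

lemma norm_diff_sq: "(norm (a - b))^2 = (norm a)^2 - 2 * inner a b + (norm (b::'a::real_inner))^2"
  by (simp add: power2_norm_eq_inner inner_diff_left inner_diff_right inner_commute)


lemma qform_lin: "qform (a *\<^sub>R X + b *\<^sub>R Y) x = complex_of_real a * qform X x + complex_of_real b * qform Y x"
  unfolding qform_def vector_add_component vector_scaleR_component unfolding scaleR_conv_of_real
  by (simp add: algebra_simps sum.distrib sum_distrib_left)

lemma trace_lin: "trace (a *\<^sub>R X + b *\<^sub>R Y) = complex_of_real a * trace X + complex_of_real b * trace (Y::complex^'n^'n)"
  unfolding trace_def vector_add_component vector_scaleR_component unfolding scaleR_conv_of_real
  by (simp add: algebra_simps sum.distrib sum_distrib_left)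

lemma traceH_lin: "trace ((a *\<^sub>R X + b *\<^sub>R Y) ** H) = complex_of_real a * trace (X ** H) + complex_of_real b * trace (Y ** (H::complex^'n^'n))"
  unfolding trace_mult vector_add_component vector_scaleR_component unfolding scaleR_conv_of_real
  by (simp add: algebra_simps sum.distrib sum_distrib_left)

lemma psd_conv: assumes "psd X" "psd Y" "0 \<le> a" "0 \<le> b" shows "psd (a *\<^sub>R X + b *\<^sub>R Y)"
  using assms unfolding psd_def by (simp add: qform_lin)

lemma qform_scaleR: "qform A (c *\<^sub>R x) = complex_of_real (c^2) * qform A x"
  unfolding qform_def vector_scaleR_component unfolding scaleR_conv_of_real
  by (simp add: algebra_simps sum_distrib_left power2_eq_square)

lemma norm_sq_vec: "(norm (x::complex^'n))^2 = (\<Sum>i\<in>UNIV. (cmod (x$i))^2)"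
  unfolding norm_vec_def L2_set_def by (simp add: sum_nonneg)

lemma sum_cnj_self: "(\<Sum>i\<in>UNIV. cnj (x$i) * x$i) = complex_of_real ((norm (x::complex^'n))^2)"
proof -
  have "(\<Sum>i\<in>UNIV. cnj (x$i) * x$i) = (\<Sum>i\<in>UNIV. complex_of_real ((cmod (x$i))^2))"
    by (simp only: complex_norm_square mult.commute)
  then show ?thesis by (simp add: norm_sq_vec)
qed

lemma St_closed: "closed (St t :: (complex^'n^'n) set)"
proof -
  have eq: "St t = {\<rho>::complex^'n^'n. (\<forall>x. Im (qform \<rho> x) = 0 \<and> 0 \<le> Re (qform \<rho> x)) \<and> trace \<rho> = 1 \<and> Re (trace (\<rho> ** \<rho>)) \<le> t}"
    by (simp add: St_def psd_def)
  show ?thesis unfolding eq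
    apply (intro closed_Collect_conj closed_Collect_all closed_Collect_eq closed_Collect_le)
    apply (simp_all only: qform_def trace_mult)
    apply (simp_all only: trace_def)
    apply (intro continuous_intros)+
    done
qed

lemma St_bounded: "bounded (St t :: (complex^'n^'n) set)"
  unfolding bounded_iff
proof (intro exI ballI)
  fix \<rho> :: "complex^'n^'n" assume "\<rho> \<in> St t"
  then have "psd \<rho>" "Re (trace (\<rho> ** \<rho>)) \<le> t" by (auto simp: St_def)
  then have "(norm \<rho>)^2 \<le> t" by (simp add: psd_purity)
  then show "norm \<rho> \<le> sqrt t" by (rule real_le_rsqrt)
qed


lemma St_nonempty:
  assumes "1 / real CARD('n) < t"
  shows "(\<chi> i j. if i = j then complex_of_real (1 / real CARD('n)) else 0) \<in> (St t :: (complex^'n^'n) set)"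
proof -
  define c where "c = 1 / real CARD('n)"
  define I0 :: "complex^'n^'n" where "I0 = (\<chi> i j. if i = j then complex_of_real c else 0)"
  have q: "qform I0 x = complex_of_real (c * (norm x)^2)" for x
  proof -
    have "qform I0 x = complex_of_real c * (\<Sum>i\<in>UNIV. cnj (x$i) * x$i)"
      by (simp add: qform_def I0_def if0_simps sum_distrib_left mult_ac)
    then show ?thesis by (simp add: sum_cnj_self)
  qed
  have "psd I0" unfolding psd_def q by (simp add: c_def)
  moreover have "trace I0 = 1" by (simp add: trace_def I0_def c_def)
  moreover have "trace (I0 ** I0) = complex_of_real (real CARD('n) * c * c)"
    by (simp add: trace_mult I0_def if0_simps)
  moreover have "real CARD('n) * c * c = c" by (simp add: c_def)
  ultimately show ?thesis using assms unfolding St_def I0_def c_def by simp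
qed

lemma rank_one:
  fixes v :: "complex^'n" and H :: "complex^'n^'n"
  assumes "norm v = 1"
  defines "\<sigma> \<equiv> (\<chi> i j. v$i * cnj (v$j))"
  shows "psd \<sigma>" "trace \<sigma> = 1" "trace (\<sigma> ** \<sigma>) = 1" "trace (\<sigma> ** H) = qform H v"
proof -
  have s1: "(\<Sum>i\<in>UNIV. v$i * cnj (v$i)) = 1" using sum_cnj_self[of v] assms(1) by (simp add: mult.commute)
  show "psd \<sigma>"
    unfolding psd_def
  proof
    fix x
    define \<beta> where "\<beta> = (\<Sum>i\<in>UNIV. cnj (x$i) * v$i)"
    have "qform \<sigma> x = \<beta> * cnj \<beta>"
    proof -
      have "\<beta> * cnj \<beta> = (\<Sum>i\<in>UNIV. cnj (x$i) * v$i) * (\<Sum>j\<in>UNIV. cnj (v$j) * x$j)"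
        unfolding \<beta>_def by (simp add: mult.commute)
      then show ?thesis by (simp add: sum_product qform_def \<sigma>_def mult_ac)
    qed
    also have "\<dots> = complex_of_real ((cmod \<beta>)^2)" by (simp only: complex_norm_square)
    finally show "Im (qform \<sigma> x) = 0 \<and> 0 \<le> Re (qform \<sigma> x)" by simp
  qed
  show "trace \<sigma> = 1" using s1 by (simp add: trace_def \<sigma>_def)
  have "trace (\<sigma> ** \<sigma>) = (\<Sum>i\<in>UNIV. v$i * cnj (v$i)) * (\<Sum>k\<in>UNIV. v$k * cnj (v$k))"
    by (simp add: trace_mult \<sigma>_def sum_product mult_ac)
  then show "trace (\<sigma> ** \<sigma>) = 1" using s1 by simp
  have "trace (\<sigma> ** H) = (\<Sum>i\<in>UNIV. \<Sum>k\<in>UNIV. cnj (v$k) * H$k$i * v$i)"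
    by (simp add: trace_mult \<sigma>_def mult_ac)
  also have "\<dots> = qform H v" unfolding qform_def by (subst sum.swap) simp
  finally show "trace (\<sigma> ** H) = qform H v" .
qed


lemma top_vector:
  fixes H :: "complex^'n^'n"
  shows "\<exists>v. norm v = 1 \<and> (\<forall>x. Re (qform H x) \<le> Re (qform H v) * (norm x)^2)"
proof -
  obtain i :: 'n where True by blast
  have n1: "norm (axis i (1::complex)) = 1"
  proof -
    have e: "(\<lambda>k. (cmod (axis i (1::complex) $ k))^2) = (\<lambda>k. if k = i then 1 else 0)"
      by (auto simp: axis_def)
    have "(norm (axis i (1::complex)))^2 = 1" unfolding norm_sq_vec e by simp
    then show ?thesis by (simp add: power2_eq_1_iff norm_ge_zero)
  qed
  have cont: "continuous_on (sphere 0 1) (\<lambda>x::complex^'n. Re (qform H x))"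
    unfolding qform_def by (intro continuous_intros)
  obtain v where v: "v \<in> sphere (0::complex^'n) 1" and vmax: "\<forall>y\<in>sphere 0 1. Re (qform H y) \<le> Re (qform H v)"
    using continuous_attains_sup[OF compact_sphere _ cont] n1
    by (metis dist_0_norm ex_in_conv mem_sphere)
  have "Re (qform H x) \<le> Re (qform H v) * (norm x)^2" for x
  proof (cases "x = 0")
    case True then show ?thesis by (simp add: qform_def)
  next
    case False
    define u where "u = (1 / norm x) *\<^sub>R x"
    have "u \<in> sphere 0 1" using False by (simp add: u_def)
    then have "Re (qform H u) \<le> Re (qform H v)" using vmax by blast
    moreover have "x = norm x *\<^sub>R u" using False by (simp add: u_def)
    then have "qform H x = complex_of_real ((norm x)^2) * qform H u" by (metis qform_scaleR)
    ultimately show ?thesis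
      by (simp add: mult.commute[of _ "(norm x)^2"] mult_left_mono)
  qed
  then show ?thesis using v by auto
qed


theorem mainTheorem5:
  fixes H :: "complex^'n^'n" and t :: real
  assumes "hermitian H"
    and "1 / real CARD('n) < t" and "t < 1"
  shows "(\<exists>\<rho>s \<in> St t. trace (\<rho>s ** \<rho>s) = complex_of_real t \<and>
            (\<forall>\<rho> \<in> St t. Re (trace (\<rho> ** H)) \<le> Re (trace (\<rho>s ** H))))
       \<and> (\<forall>\<rho>s \<in> St t. trace (\<rho>s ** \<rho>s) = complex_of_real t \<and>
            (\<forall>\<rho> \<in> St t. Re (trace (\<rho> ** H)) \<le> Re (trace (\<rho>s ** H)))
          \<longrightarrow> (\<forall>\<rho>. psd \<rho> \<and> trace \<rho> = 1 \<and> trace (\<rho> ** \<rho>) = complex_of_real t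
                 \<longrightarrow> frob_norm (\<rho>s - H) \<le> frob_norm (\<rho> - H)))"
proof (intro conjI ballI impI allI)
  fix \<rho>s \<rho> :: "complex^'n^'n"
  assume "\<rho>s \<in> St t" and h: "trace (\<rho>s ** \<rho>s) = complex_of_real t \<and>
            (\<forall>\<rho> \<in> St t. Re (trace (\<rho> ** H)) \<le> Re (trace (\<rho>s ** H)))"
    and r: "psd \<rho> \<and> trace \<rho> = 1 \<and> trace (\<rho> ** \<rho>) = complex_of_real t"
  have "\<rho> \<in> St t" using r by (simp add: St_def)
  then have le: "Re (trace (\<rho> ** H)) \<le> Re (trace (\<rho>s ** H))" using h by blast
  have psds: "psd \<rho>s" using \<open>\<rho>s \<in> St t\<close> by (simp add: St_def)
  have "complex_of_real ((norm \<rho>s)^2) = complex_of_real t" using h psd_purity[OF psds] by metis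
  then have ns: "(norm \<rho>s)^2 = t" by (simp only: of_real_eq_iff)
  have "complex_of_real ((norm \<rho>)^2) = complex_of_real t" using r psd_purity[of \<rho>] by metis
  then have nr: "(norm \<rho>)^2 = t" by (simp only: of_real_eq_iff)
  have "(norm (\<rho>s - H))^2 \<le> (norm (\<rho> - H))^2"
    unfolding norm_diff_sq inner_mat[OF assms(1)] using ns nr le by simp
  then show "frob_norm (\<rho>s - H) \<le> frob_norm (\<rho> - H)"
    unfolding frob_norm_eq by (rule power2_le_imp_le) simp
next
  define f where "f = (\<lambda>\<rho>::complex^'n^'n. Re (trace (\<rho> ** H)))"
  have cpt: "compact (St t :: (complex^'n^'n) set)"
    unfolding compact_eq_bounded_closed by (intro conjI St_bounded St_closed)
  have ne: "St t \<noteq> ({} :: (complex^'n^'n) set)" using St_nonempty[OF assms(2)] by blast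
  have contf: "continuous_on (St t) f" unfolding f_def trace_mult by (intro continuous_intros)
  obtain \<rho>0 where \<rho>0: "\<rho>0 \<in> St t" and max0: "\<forall>\<rho>\<in>St t. f \<rho> \<le> f \<rho>0"
    using continuous_attains_sup[OF cpt ne contf] by blast
  obtain v where v1: "norm v = 1" and vmax: "\<forall>x. Re (qform H x) \<le> Re (qform H v) * (norm x)^2"
    using top_vector[of H] by blast
  define lam where "lam = Re (qform H v)"
  define \<sigma> :: "complex^'n^'n" where "\<sigma> = (\<chi> i j. v$i * cnj (v$j))"
  note ro = rank_one(1-3)[OF v1, folded \<sigma>_def] rank_one(4)[OF v1, of H, folded \<sigma>_def]
  have psd0: "psd \<rho>0" and tr0: "trace \<rho>0 = 1" and p0: "Re (trace (\<rho>0 ** \<rho>0)) \<le> t"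
    using \<rho>0 by (auto simp: St_def)
  define A :: "complex^'n^'n" where "A = (\<chi> i j. (if i = j then complex_of_real lam else 0) - H$i$j)"
  have qA: "qform A x = complex_of_real (lam * (norm x)^2) - qform H x" for x
  proof -
    have "qform A x = complex_of_real lam * (\<Sum>i\<in>UNIV. cnj (x$i) * x$i) - qform H x"
      by (simp add: qform_def A_def algebra_simps if0_simps sum_subtractf sum_distrib_left)
    then show ?thesis by (simp add: sum_cnj_self)
  qed
  have Apsd: "\<forall>x. 0 \<le> Re (qform A x)" using vmax unfolding qA lam_def by simp
  have "(\<Sum>i\<in>UNIV. \<Sum>j\<in>UNIV. \<rho>0$i$j * A$j$i) = complex_of_real lam * trace \<rho>0 - trace (\<rho>0 ** H)"
    unfolding trace_mult by (simp add: A_def trace_def algebra_simps if0_simps sum_subtractf sum_distrib_left)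
  then have f0: "f \<rho>0 \<le> lam" using trace_psd_nonneg[OF psd0 Apsd] tr0 unfolding f_def by simp
  define R where "R = (\<lambda>s::real. (1 - s) *\<^sub>R \<rho>0 + s *\<^sub>R \<sigma>)"
  define p where "p = (\<lambda>s. Re (trace (R s ** R s)))"
  have contp: "continuous_on {0..1} p" unfolding p_def R_def trace_mult
    by (intro continuous_intros)
  have "p 0 \<le> t" using p0 by (simp add: p_def R_def)
  moreover have "t \<le> p 1" using ro(3) assms(3) by (simp add: p_def R_def)
  ultimately obtain s where s: "0 \<le> s" "s \<le> 1" "p s = t"
    using IVT'[of p 0 t 1, OF _ _ _ contp] by auto
  have psdR: "psd (R s)" unfolding R_def using s by (intro psd_conv psd0 ro(1)) auto
  have trR: "trace (R s) = 1" unfolding R_def trace_lin tr0 ro(2) by simp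
  have RSt: "R s \<in> St t" using psdR trR s(3) by (simp add: St_def p_def)
  have nR: "(norm (R s))^2 = t" using psd_purity[OF psdR] s(3) unfolding p_def by simp
  have pur: "trace (R s ** R s) = complex_of_real t"
    using psd_purity[OF psdR] nR by metis
  have "f (R s) = (1 - s) * f \<rho>0 + s * lam"
    unfolding f_def R_def traceH_lin ro(4) lam_def by simp
  also have "\<dots> \<ge> f \<rho>0"
  proof -
    have "s * f \<rho>0 \<le> s * lam" using f0 s(1) by (rule mult_left_mono)
    moreover have "(1 - s) * f \<rho>0 + s * lam = f \<rho>0 + (s * lam - s * f \<rho>0)" by (simp add: algebra_simps)
    ultimately show ?thesis by linarith
  qed
  finally have "f \<rho>0 \<le> f (R s)" .
  then show "\<exists>\<rho>s \<in> St t. trace (\<rho>s ** \<rho>s) = complex_of_real t \<and>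
            (\<forall>\<rho> \<in> St t. Re (trace (\<rho> ** H)) \<le> Re (trace (\<rho>s ** H)))"
    using RSt pur max0 unfolding f_def by (meson order_trans)
qed

end
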